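(* Let $s$ be a fixed state, let $N\ge 1$, let $a_1(s),\dots,a_N(s)\in\mathbb{R}$ be centroids and $v_1(s),\dots,v_N(s)\in\mathbb{R}$ be values, and let $\beta>0$. Define, for $a\in\mathbb{R}$, $$\widehat Q_\beta(s,a)=\frac{\sum_{i=1}^N e^{-\beta|a-a_i(s)|}\,v_i(s)}{\sum_{i=1}^N e^{-\beta|a-a_i(s)|}}.$$ Then the supremum of $\widehat Q_\beta(s,\cdot)$ over the one-dimensional action space $\mathcal{A}=\mathbb{R}$ is attained at one of the centroids: $$\max_{a\in\mathbb{R}}\widehat Q_\beta(s,a)=\max_{i\in\{1,\dots,N\}}\widehat Q_\beta(s,a_i(s)).$$
   Context: A normalized (Gaussian) RBF value function, for a fixed state $s$, is a function of actions $a$ of the form $\widehat Q_\beta(s,a;\theta)=\frac{\sum_{i=1}^N e^{-\beta\|a-a_i(s;\theta)\|}v_i(s;\theta)}{\sum_{i=1}^N e^{-\beta\|a-a_i(s;\theta)\|}}$, where the centroids $a_i(s;\theta)$ and values $v_i(s;\theta)$ are outputs of a parametrized network (here treated as arbitrary fixed numbers for the fixed state $s$), and $\beta>0$ is a smoothing parameter. *)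

theory Defs
  imports "HOL-Analysis.Analysis"
begin

definition Qhat :: "real \<Rightarrow> nat \<Rightarrow> (nat \<Rightarrow> real) \<Rightarrow> (nat \<Rightarrow> real) \<Rightarrow> real \<Rightarrow> real" where
  "Qhat \<beta> N c v a =
     (\<Sum>i=1..N. exp (- \<beta> * \<bar>a - c i\<bar>) * v i) / (\<Sum>i=1..N. exp (- \<beta> * \<bar>a - c i\<bar>))"

end

theory Submission
  imports Defs
begin

lemma decomp:
  fixes \<beta> x :: real and S :: "nat set"
  assumes S: "S \<subseteq> {1..N}" and L: "\<forall>i\<in>S. c i \<le> x" and R: "\<forall>i\<in>{1..N}-S. x \<le> c i"
  shows "(\<Sum>i=1..N. exp (- \<beta> * \<bar>x - c i\<bar>) * f i) =
     exp (- \<beta> * x) * ((\<Sum>i\<in>S. exp (\<beta> * c i) * f i)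
        + exp (2 * \<beta> * x) * (\<Sum>i\<in>{1..N}-S. exp (- \<beta> * c i) * f i))"
proof -
  have fin: "finite {1..N}" by simp
  have "(\<Sum>i=1..N. exp (- \<beta> * \<bar>x - c i\<bar>) * f i) =
     (\<Sum>i\<in>S. exp (- \<beta> * \<bar>x - c i\<bar>) * f i) + (\<Sum>i\<in>{1..N}-S. exp (- \<beta> * \<bar>x - c i\<bar>) * f i)"
    using sum.subset_diff[OF S fin] by (simp add: add.commute)
  also have "(\<Sum>i\<in>S. exp (- \<beta> * \<bar>x - c i\<bar>) * f i) = (\<Sum>i\<in>S. exp (- \<beta> * x) * (exp (\<beta> * c i) * f i))"
  proof (rule sum.cong)
    fix i assume "i \<in> S"
    hence "\<bar>x - c i\<bar> = x - c i" using L by auto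
    thus "exp (- \<beta> * \<bar>x - c i\<bar>) * f i = exp (- \<beta> * x) * (exp (\<beta> * c i) * f i)"
    proof -
      have "exp (- \<beta> * \<bar>x - c i\<bar>) = exp (- \<beta> * x + \<beta> * c i)"
        using \<open>\<bar>x - c i\<bar> = x - c i\<close> by (simp add: algebra_simps)
      thus ?thesis by (simp only: exp_add mult.assoc)
    qed
  qed simp
  also have "(\<Sum>i\<in>{1..N}-S. exp (- \<beta> * \<bar>x - c i\<bar>) * f i)
      = (\<Sum>i\<in>{1..N}-S. exp (- \<beta> * x) * exp (2 * \<beta> * x) * (exp (- \<beta> * c i) * f i))"
  proof (rule sum.cong)
    fix i assume "i \<in> {1..N}-S"
    hence "\<bar>x - c i\<bar> = c i - x" using R by auto
    thus "exp (- \<beta> * \<bar>x - c i\<bar>) * f i = exp (- \<beta> * x) * exp (2 * \<beta> * x) * (exp (- \<beta> * c i) * f i)"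
      by (simp add: mult_exp_exp algebra_simps)
  qed simp
  finally show ?thesis by (simp only: sum_distrib_left distrib_left mult.assoc)
qed

lemma lin:
  fixes A B t1 t t2 :: real
  assumes "t1 \<le> t" "t \<le> t2" "A + B * t1 \<le> 0" "A + B * t2 \<le> 0"
  shows "A + B * t \<le> 0"
proof (cases "B \<ge> 0")
  case True
  hence "B * t \<le> B * t2" using assms by (simp add: mult_left_mono)
  thus ?thesis using assms by linarith
next
  case False
  hence "B * t \<le> B * t1" using assms by (simp add: mult_left_mono_neg)
  thus ?thesis using assms by linarith
qed

lemma ex_argmin:
  fixes f :: "nat \<Rightarrow> real"
  assumes "finite A" "A \<noteq> {}"
  shows "\<exists>x\<in>A. \<forall>y\<in>A. f x \<le> f y"
proof -
  have "Min (f ` A) \<in> f ` A" using assms by (intro Min_in) auto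
  then obtain x where x: "x \<in> A" "f x = Min (f ` A)" by (auto simp del: Min_in)
  have "\<forall>y\<in>A. f x \<le> f y" using x assms by simp
  thus ?thesis using x by blast
qed

lemma ex_argmax:
  fixes f :: "nat \<Rightarrow> real"
  assumes "finite A" "A \<noteq> {}"
  shows "\<exists>x\<in>A. \<forall>y\<in>A. f y \<le> f x"
proof -
  have "Max (f ` A) \<in> f ` A" using assms by (intro Max_in) auto
  then obtain x where x: "x \<in> A" "f x = Max (f ` A)" by (auto simp del: Max_in)
  have "\<forall>y\<in>A. f y \<le> f x" using x assms by simp
  thus ?thesis using x by blast
qed

theorem theorem1:
  fixes N :: nat and c v :: "nat \<Rightarrow> real" and \<beta> :: real
  assumes "N \<ge> 1" and "\<beta> > 0"
  shows "(\<forall>a. Qhat \<beta> N c v a \<le> (MAX i\<in>{1..N}. Qhat \<beta> N c v (c i)))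
       \<and> (SUP a. Qhat \<beta> N c v a) = (MAX i\<in>{1..N}. Qhat \<beta> N c v (c i))"
proof -
  define M where "M = (MAX i\<in>{1..N}. Qhat \<beta> N c v (c i))"
  define f where "f i = v i - M" for i
  define D where "D x = (\<Sum>i=1..N. exp (- \<beta> * \<bar>x - c i\<bar>))" for x
  define g where "g x = (\<Sum>i=1..N. exp (- \<beta> * \<bar>x - c i\<bar>) * f i)" for x
  have ne: "{1..N} \<noteq> {}" using assms(1) by simp
  have Dpos: "D x > 0" for x unfolding D_def using ne by (intro sum_pos) auto
  have gD: "g x = D x * (Qhat \<beta> N c v x - M)" for x
  proof -
    have "g x = (\<Sum>i=1..N. exp (- \<beta> * \<bar>x - c i\<bar>) * v i) - M * D x"
      unfolding g_def D_def f_def by (simp add: algebra_simps sum_subtractf sum_distrib_left)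
    also have "(\<Sum>i=1..N. exp (- \<beta> * \<bar>x - c i\<bar>) * v i) = D x * Qhat \<beta> N c v x"
      using Dpos[of x] unfolding Qhat_def D_def by simp
    finally show ?thesis by (simp add: algebra_simps)
  qed
  have Mge: "Qhat \<beta> N c v (c j) \<le> M" if "j \<in> {1..N}" for j
    unfolding M_def using that by (intro Max_ge) auto
  have gc: "g (c j) \<le> 0" if "j \<in> {1..N}" for j
    using gD[of "c j"] Mge[OF that] Dpos[of "c j"] by (simp add: mult_nonneg_nonpos)
  have gle: "g a \<le> 0" for a
  proof -
    define S where "S = {i\<in>{1..N}. c i \<le> a}"
    define A where "A = (\<Sum>i\<in>S. exp (\<beta> * c i) * f i)"
    define B where "B = (\<Sum>i\<in>{1..N}-S. exp (- \<beta> * c i) * f i)"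
    have Ssub: "S \<subseteq> {1..N}" unfolding S_def by auto
    have dec: "g x = exp (- \<beta> * x) * (A + exp (2 * \<beta> * x) * B)"
      if "\<forall>i\<in>S. c i \<le> x" "\<forall>i\<in>{1..N}-S. x \<le> c i" for x
      unfolding g_def A_def B_def using decomp[OF Ssub that] by simp
    have sgn: "g x \<le> 0 \<longleftrightarrow> A + B * exp (2 * \<beta> * x) \<le> 0"
      if "\<forall>i\<in>S. c i \<le> x" "\<forall>i\<in>{1..N}-S. x \<le> c i" for x
    proof -
      have "g x = exp (- \<beta> * x) * (A + B * exp (2 * \<beta> * x))"
        using dec[OF that] by (simp only: mult.commute[of "exp (2 * \<beta> * x)" B])
      moreover have "exp (- \<beta> * x) > 0" by simp
      ultimately show ?thesis by (simp add: mult_le_0_iff)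
    qed
    have La: "\<forall>i\<in>S. c i \<le> a" "\<forall>i\<in>{1..N}-S. a \<le> c i" unfolding S_def by auto
    show ?thesis
    proof (cases "S = {}")
      case True
      hence R: "{1..N} - S \<noteq> {}" using ne by auto
      obtain q where q: "q \<in> {1..N}-S" "\<forall>i\<in>{1..N}-S. c q \<le> c i"
        using ex_argmin[of "{1..N}-S" c] R by blast
      have "A = 0" unfolding A_def using True by simp
      have "A + B * exp (2 * \<beta> * c q) \<le> 0"
      proof -
        have "\<forall>i\<in>S. c i \<le> c q" using True by simp
        thus ?thesis using sgn[of "c q"] gc[of q] q by simp
      qed
      hence "B \<le> 0" using \<open>A = 0\<close> by (simp add: mult_le_0_iff)
      thus ?thesis using sgn[OF La] \<open>A = 0\<close> by (simp add: mult_le_0_iff)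
    next
      case False
      obtain p where p: "p \<in> S" "\<forall>i\<in>S. c i \<le> c p"
        using ex_argmax[of S c] False finite_subset[OF Ssub] by blast
      have pS: "\<forall>i\<in>{1..N}-S. c p \<le> c i" using p La by (meson order_trans)
      have hp: "A + B * exp (2 * \<beta> * c p) \<le> 0"
        using sgn[of "c p"] gc[of p] p(2) pS \<open>p \<in> S\<close> Ssub by blast
      have tp: "exp (2 * \<beta> * c p) \<le> exp (2 * \<beta> * a)"
        using p La assms(2) by auto
      show ?thesis
      proof (cases "{1..N} - S = {}")
        case True
        have "B = 0" unfolding B_def True by simp
        thus ?thesis using sgn[OF La] hp by simp
      next
        case R: False
        obtain q where q: "q \<in> {1..N}-S" "\<forall>i\<in>{1..N}-S. c q \<le> c i"
          using ex_argmin[of "{1..N}-S" c] R by blast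
        have qS: "\<forall>i\<in>S. c i \<le> c q" using q La by (meson order_trans)
        have hq: "A + B * exp (2 * \<beta> * c q) \<le> 0"
          using sgn[of "c q"] gc[of q] q(2) qS \<open>q \<in> {1..N}-S\<close> by blast
        have tq: "exp (2 * \<beta> * a) \<le> exp (2 * \<beta> * c q)"
          using q La assms(2) by auto
        show ?thesis using sgn[OF La] lin[OF tp tq hp hq] by simp
      qed
    qed
  qed
  have Qle: "Qhat \<beta> N c v a \<le> M" for a
    using gle[of a] gD[of a] Dpos[of a] by (simp add: mult_le_0_iff)
  obtain j where j: "j \<in> {1..N}" "Qhat \<beta> N c v (c j) = M"
  proof -
    obtain j where "j \<in> {1..N}" "\<forall>y\<in>{1..N}. Qhat \<beta> N c v (c y) \<le> Qhat \<beta> N c v (c j)"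
      using ex_argmax[of "{1..N}" "\<lambda>i. Qhat \<beta> N c v (c i)"] ne by auto
    moreover have "Qhat \<beta> N c v (c j) = M" unfolding M_def
      using calculation by (intro antisym Max_ge Max.boundedI) auto
    ultimately show ?thesis using that by blast
  qed
  have "(SUP a. Qhat \<beta> N c v a) = M"
    by (rule cSup_eq_maximum) (use j Qle in auto)
  thus ?thesis using Qle M_def by simp
qed

end
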